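(* Let $q=2^n$ be such that $q-1$ is prime. Then there exists a linear $(q-3,q-1,q)$-AONT over $\mathbb{F}_q$, i.e. an invertible $(q-1)\times(q-1)$ matrix over $\mathbb{F}_q$ all of whose $(q-3)\times(q-3)$ submatrices are invertible.
   Context: A linear $(t,s,q)$-AONT over $\mathbb{F}_q$ is given by an invertible $s\times s$ matrix $M$ over $\mathbb{F}_q$ (transform $(y_1,\dots,y_s)=(x_1,\dots,x_s)M^{-1}$); $M$ defines a linear $(t,s,q)$-AONT iff every $t\times t$ submatrix of $M$ is invertible (a $0\times0$ submatrix counts as invertible). *)

theory Defs
  imports "Jordan_Normal_Form.DL_Submatrix" "HOL-Computational_Algebra.Primes"
begin

definition linear_AONT :: "nat \<Rightarrow> nat \<Rightarrow> 'a::field mat \<Rightarrow> bool" where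
  "linear_AONT t s M \<longleftrightarrow>
     M \<in> carrier_mat s s \<and> invertible_mat M \<and>
     (\<forall>I J. I \<subseteq> {..<s} \<longrightarrow> J \<subseteq> {..<s} \<longrightarrow> card I = t \<longrightarrow> card J = t \<longrightarrow>
        invertible_mat (submatrix M I J))"

end

theory Submission
  imports Defs "Jordan_Normal_Form.Determinant"
begin

lemma card_times_one_zero:
  "(of_nat (card (UNIV :: 'a::{finite,ring_1} set)) :: 'a) = 0"
proof -
  have inj: "inj (\<lambda>x::'a. x + 1)" by (simp add: inj_def)
  have surj: "range (\<lambda>x::'a. x + 1) = UNIV"
  proof -
    have "y \<in> range (\<lambda>x::'a. x + 1)" for y :: 'a
    proof -
      have "y = (y - 1) + 1" by simp
      then show ?thesis by blast
    qed
    then show ?thesis by blast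
  qed
  have "(\<Sum>x\<in>(UNIV::'a set). x) = (\<Sum>x\<in>range (\<lambda>x::'a. x + 1). x)" using surj by simp
  also have "\<dots> = (\<Sum>x\<in>(UNIV::'a set). x + 1)" using sum.reindex[OF inj] by simp
  also have "\<dots> = (\<Sum>x\<in>(UNIV::'a set). x) + of_nat (card (UNIV::'a set))"
    by (simp add: sum.distrib)
  finally show ?thesis by simp
qed

lemma fermat_field:
  fixes a :: "'a::{finite,field}"
  assumes "a \<noteq> 0"
  shows "a ^ (card (UNIV :: 'a set) - 1) = 1"
proof -
  let ?U = "UNIV - {0::'a}"
  have inj: "inj_on (\<lambda>x. a * x) ?U" using assms by (auto simp: inj_on_def)
  have img: "(\<lambda>x. a * x) ` ?U = ?U"
  proof
    show "(\<lambda>x. a * x) ` ?U \<subseteq> ?U" using assms by auto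
    show "?U \<subseteq> (\<lambda>x. a * x) ` ?U"
    proof
      fix y assume "y \<in> ?U"
      then have "inverse a * y \<in> ?U" "y = a * (inverse a * y)" using assms by auto
      then show "y \<in> (\<lambda>x. a * x) ` ?U" by blast
    qed
  qed
  have "prod (\<lambda>x. x) ?U = prod (\<lambda>x. x) ((\<lambda>x. a * x) ` ?U)" using img by simp
  also have "\<dots> = prod (\<lambda>x. a * x) ?U" using prod.reindex[OF inj] by simp
  also have "\<dots> = a ^ card ?U * prod (\<lambda>x. x) ?U" by (simp add: prod.distrib)
  finally have eq: "prod (\<lambda>x. x) ?U = a ^ card ?U * prod (\<lambda>x. x) ?U" .
  have nz: "prod (\<lambda>x. x) ?U \<noteq> 0" by simp
  have "1 * prod (\<lambda>x. x) ?U = a ^ card ?U * prod (\<lambda>x. x) ?U" using eq by simp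
  then have "1 = a ^ card ?U" using nz mult_right_cancel by blast
  then have "a ^ card ?U = 1" by simp
  moreover have "card ?U = card (UNIV :: 'a set) - 1" by (simp add: card_Diff_singleton)
  ultimately show ?thesis by simp
qed

lemma pow_mod_order:
  fixes a :: "'a::field"
  assumes "a ^ p = 1"
  shows "a ^ m = a ^ (m mod p)"
proof -
  have "a ^ m = a ^ (p * (m div p) + m mod p)" by simp
  also have "\<dots> = (a ^ p) ^ (m div p) * a ^ (m mod p)" unfolding power_add power_mult by simp
  finally show ?thesis using assms by simp
qed

lemma pow_eq_iff_mod:
  fixes a :: "'a::field"
  assumes p: "prime p" and ap: "a ^ p = 1" and a1: "a \<noteq> 1"
  shows "a ^ m = a ^ k \<longleftrightarrow> m mod p = k mod p"
proof
  assume "m mod p = k mod p"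
  then show "a ^ m = a ^ k" using pow_mod_order[OF ap, of m] pow_mod_order[OF ap, of k] by simp
next
  have a0: "a \<noteq> 0"
  proof
    assume "a = 0"
    with ap prime_gt_0_nat[OF p] show False by (simp add: power_0_left)
  qed
  have key: "u = w" if "u < p" "w < p" "u \<le> w" "a ^ u = a ^ w" for u w
  proof (rule ccontr)
    assume "u \<noteq> w"
    define d where "d = w - u"
    have d0: "0 < d" "d < p" using that \<open>u \<noteq> w\<close> by (auto simp: d_def)
    have "a ^ (u + d) = a ^ w" using that by (simp add: d_def)
    then have "a ^ u * a ^ d = a ^ u * 1" using that by (simp add: power_add)
    then have ad: "a ^ d = 1" using a0 by simp
    have "\<not> p dvd d" using d0 by (simp add: nat_dvd_not_less)
    then have "coprime p d" using p by (simp add: prime_imp_coprime)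
    then have cop: "coprime d p" by (simp add: coprime_commute)
    then have "gcd d p = 1" by simp
    obtain x y where xy: "d * x = p * y + gcd d p" using bezout_nat[of d p] d0 by auto
    have "a ^ (d * x) = 1" using ad by (simp add: power_mult)
    moreover have "a ^ (p * y + 1) = a" using ap by (simp add: power_add power_mult)
    ultimately show False using xy \<open>gcd d p = 1\<close> a1 by simp
  qed
  assume "a ^ m = a ^ k"
  then have e: "a ^ (m mod p) = a ^ (k mod p)"
    using pow_mod_order[OF ap, of m] pow_mod_order[OF ap, of k] by simp
  have lt: "m mod p < p" "k mod p < p" using p prime_gt_0_nat by auto
  show "m mod p = k mod p"
    using key[OF lt(1) lt(2) _ e] key[OF lt(2) lt(1) _ e[symmetric]] by linarith
qed

lemma inv_formula:
  fixes a :: "'a::field" and x :: "nat \<Rightarrow> 'a"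
  assumes p: "prime p" and ap: "a ^ p = 1" and a1: "a \<noteq> 1" and pm: "(of_nat p :: 'a) = -1"
    and j: "j < p"
  shows "x j = - (\<Sum>i<p. inverse a ^ (i*j) * (\<Sum>k<p. a ^ (i*k) * x k))"
proof -
  have a0: "a \<noteq> 0"
  proof
    assume "a = 0"
    with ap prime_gt_0_nat[OF p] show False by (simp add: power_0_left)
  qed
  have inner: "(\<Sum>i<p. inverse a ^ (i*j) * a ^ (i*k)) = (if k = j then -1 else 0)" if k: "k < p" for k
  proof (cases "k = j")
    case True
    have "inverse a ^ (i*j) * a ^ (i*k) = 1" for i
      using True a0 by (simp add: power_inverse)
    then show ?thesis using True pm by simp
  next
    case False
    define g where "g = inverse a ^ j * a ^ k"
    have trm: "inverse a ^ (i*j) * a ^ (i*k) = g ^ i" for i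
    proof -
      have "inverse a ^ (i*j) = (inverse a ^ j) ^ i" "a ^ (i*k) = (a ^ k) ^ i"
        by (metis power_mult mult.commute)+
      then show ?thesis unfolding g_def power_mult_distrib by simp
    qed
    have "g \<noteq> 1"
    proof
      assume "g = 1"
      then have "a ^ k = a ^ j" unfolding g_def using a0 by (simp add: power_inverse field_simps)
      then have "k mod p = j mod p" using pow_eq_iff_mod[OF p ap a1] by blast
      then show False using False k j by simp
    qed
    moreover have "g ^ p = 1"
    proof -
      have "g ^ p = inverse ((a ^ p) ^ j) * (a ^ p) ^ k"
        unfolding g_def by (simp add: power_mult_distrib power_inverse flip: power_mult) (simp add: mult.commute)
      then show ?thesis using ap by simp
    qed
    ultimately show ?thesis using False by (simp add: trm sum_gp_strict)
  qed
  have "(\<Sum>i<p. inverse a ^ (i*j) * (\<Sum>k<p. a ^ (i*k) * x k))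
      = (\<Sum>i<p. \<Sum>k<p. x k * (inverse a ^ (i*j) * a ^ (i*k)))"
    by (simp add: sum_distrib_left algebra_simps)
  also have "\<dots> = (\<Sum>k<p. x k * (\<Sum>i<p. inverse a ^ (i*j) * a ^ (i*k)))"
    by (subst sum.swap) (simp add: sum_distrib_left)
  also have "\<dots> = (\<Sum>k<p. x k * (if k = j then -1 else 0))"
    by (rule sum.cong) (simp_all add: inner)
  also have "\<dots> = (\<Sum>k<p. if k = j then - x j else 0)" by (rule sum.cong) auto
  also have "\<dots> = - x j" using j by (simp add: sum.delta sum.delta')
  finally show ?thesis by simp
qed

lemma nondeg:
  fixes b :: "'a::field"
  assumes p: "prime p" and bp: "b ^ p = 1" and b1: "b \<noteq> 1"
    and r: "r1 < p" "r2 < p" "r1 \<noteq> r2" and c: "c1 < p" "c2 < p" "c1 \<noteq> c2"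
  shows "b ^ (r1*c1) * b ^ (r2*c2) \<noteq> b ^ (r2*c1) * b ^ (r1*c2)"
proof
  assume "b ^ (r1*c1) * b ^ (r2*c2) = b ^ (r2*c1) * b ^ (r1*c2)"
  then have "b ^ (r1*c1 + r2*c2) = b ^ (r2*c1 + r1*c2)" by (simp add: power_add)
  then have "(r1*c1 + r2*c2) mod p = (r2*c1 + r1*c2) mod p" using pow_eq_iff_mod[OF p bp b1] by blast
  then have "int (r1*c1 + r2*c2) mod int p = int (r2*c1 + r1*c2) mod int p"
    by (metis of_nat_mod)
  then have "int p dvd int (r1*c1 + r2*c2) - int (r2*c1 + r1*c2)"
    using mod_eq_dvd_iff by blast
  then have "int p dvd (int r1 - int r2) * (int c1 - int c2)"
    by (simp add: algebra_simps)
  moreover have "prime (int p)" using p by simp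
  ultimately have "int p dvd (int r1 - int r2) \<or> int p dvd (int c1 - int c2)"
    using prime_dvd_mult_iff by blast
  moreover have "\<not> int p dvd (int r1 - int r2)" "\<not> int p dvd (int c1 - int c2)"
    using r c dvd_imp_le_int[of "int r1 - int r2" "int p"] dvd_imp_le_int[of "int c1 - int c2" "int p"] by auto
  ultimately show False by blast
qed


lemma solve2:
  fixes A B u1 v1 u2 v2 :: "'a::field"
  assumes "u1 * A + v1 * B = 0" "u2 * A + v2 * B = 0" "u1 * v2 \<noteq> v1 * u2"
  shows "A = 0 \<and> B = 0"
proof -
  have "A * (u1 * v2 - v1 * u2) = (u1 * A + v1 * B) * v2 - (u2 * A + v2 * B) * v1"
    by (simp add: algebra_simps)
  then have "A * (u1 * v2 - v1 * u2) = 0" using assms by simp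
  then have A: "A = 0" using assms(3) by simp
  have "B * (u1 * v2 - v1 * u2) = (u2 * A + v2 * B) * u1 - (u1 * A + v1 * B) * u2"
    by (simp add: algebra_simps)
  then have "B * (u1 * v2 - v1 * u2) = 0" using assms by simp
  then have "B = 0" using assms(3) by simp
  with A show ?thesis by simp
qed

lemma sub_kernel:
  fixes a :: "'a::field" and x :: "nat \<Rightarrow> 'a"
  assumes p: "prime p" and ap: "a ^ p = 1" and a1: "a \<noteq> 1" and pm: "(of_nat p :: 'a) = -1"
    and bp: "inverse a ^ p = 1" and b1: "inverse a \<noteq> 1"
    and r: "r1 < p" "r2 < p" "r1 \<noteq> r2" and c: "c1 < p" "c2 < p" "c1 \<noteq> c2"
    and hx: "x c1 = 0" "x c2 = 0"
    and hy: "\<And>i. i < p \<Longrightarrow> i \<noteq> r1 \<Longrightarrow> i \<noteq> r2 \<Longrightarrow> (\<Sum>k<p. a ^ (i*k) * x k) = 0"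
    and j: "j < p"
  shows "x j = 0"
proof -
  define y where "y i = (\<Sum>k<p. a ^ (i*k) * x k)" for i
  define b where "b = inverse a"
  have form: "x j' = - (b ^ (r1*j') * y r1 + b ^ (r2*j') * y r2)" if "j' < p" for j'
  proof -
    have "x j' = - (\<Sum>i<p. b ^ (i*j') * y i)"
      using inv_formula[OF p ap a1 pm that, of x] by (simp add: y_def b_def)
    also have "(\<Sum>i<p. b ^ (i*j') * y i) = (\<Sum>i\<in>{r1,r2}. b ^ (i*j') * y i)"
      by (rule sum.mono_neutral_right) (use r hy in \<open>auto simp: y_def\<close>)
    also have "\<dots> = b ^ (r1*j') * y r1 + b ^ (r2*j') * y r2" using r by simp
    finally show ?thesis .
  qed
  have "- (b ^ (r1*c1) * y r1 + b ^ (r2*c1) * y r2) = 0" using form[OF c(1)] hx(1) by metis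
  then have e1: "b ^ (r1*c1) * y r1 + b ^ (r2*c1) * y r2 = 0" by (simp only: neg_equal_0_iff_equal)
  have "- (b ^ (r1*c2) * y r1 + b ^ (r2*c2) * y r2) = 0" using form[OF c(2)] hx(2) by metis
  then have e2: "b ^ (r1*c2) * y r1 + b ^ (r2*c2) * y r2 = 0" by (simp only: neg_equal_0_iff_equal)
  have nd: "b ^ (r1*c1) * b ^ (r2*c2) \<noteq> b ^ (r2*c1) * b ^ (r1*c2)"
    using nondeg[OF p bp b1 r c] by (simp add: b_def)
  have "y r1 = 0 \<and> y r2 = 0" using solve2[OF e1 e2 nd] .
  then show ?thesis using form[OF j] by simp
qed

lemma pick_bij:
  assumes "finite J"
  shows "bij_betw (pick J) {..<card J} J"
proof (rule bij_betw_imageI)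
  show "inj_on (pick J) {..<card J}"
  proof (rule inj_onI)
    fix k1 k2 assume k: "k1 \<in> {..<card J}" "k2 \<in> {..<card J}" and e: "pick J k1 = pick J k2"
    have c1: "card {a\<in>J. a < pick J k1} = k1" using card_pick_le[of k1 J] k(1) by simp
    have c2: "card {a\<in>J. a < pick J k2} = k2" using card_pick_le[of k2 J] k(2) by simp
    show "k1 = k2" using c1 c2 e by metis
  qed
  show "pick J ` {..<card J} = J"
  proof
    show "pick J ` {..<card J} \<subseteq> J"
    proof (rule image_subsetI)
      fix k assume "k \<in> {..<card J}"
      then show "pick J k \<in> J" using pick_in_set_le[of k J] by simp
    qed
    show "J \<subseteq> pick J ` {..<card J}"
    proof
      fix j assume jJ: "j \<in> J"
      have "{a\<in>J. a < j} \<subset> J" using jJ by auto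
      then have "card {a\<in>J. a < j} < card J" using assms by (simp add: psubset_card_mono)
      then have k: "card {a\<in>J. a < j} \<in> {..<card J}" by simp
      have eq: "pick J (card {a\<in>J. a < j}) = j" using pick_card_in_set[OF jJ] .
      show "j \<in> pick J ` {..<card J}" using image_eqI[where f="pick J", OF eq[symmetric] k] .
    qed
  qed
qed

lemma kernel_inv:
  fixes A :: "'a::field mat"
  assumes A: "A \<in> carrier_mat n n"
    and ker: "\<And>v. v \<in> carrier_vec n \<Longrightarrow> A *\<^sub>v v = 0\<^sub>v n \<Longrightarrow> v = 0\<^sub>v n"
  shows "invertible_mat A"
proof -
  have "det A \<noteq> 0" using det_0_iff_vec_prod_zero_field[OF A] ker by blast
  from det_non_zero_imp_unit[OF A this, of "()"]
  obtain B where B: "B \<in> carrier_mat n n" "B * A = 1\<^sub>m n" "A * B = 1\<^sub>m n"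
    unfolding Units_def ring_mat_def by auto
  show ?thesis unfolding invertible_mat_def inverts_mat_def
    using A B by (auto intro!: exI[of _ B])
qed

lemma mult_vec_sum:
  assumes "A \<in> carrier_mat n m" "v \<in> carrier_vec m" "i < n"
  shows "(A *\<^sub>v v) $ i = (\<Sum>k<m. A $$ (i,k) * v $ k)"
  using assms by (simp add: scalar_prod_def atLeast0LessThan)

theorem corollary2p28:
  fixes n :: nat
  assumes "card (UNIV :: 'a::{field,finite} set) = 2 ^ n"
    and "prime (card (UNIV :: 'a set) - 1)"
  shows "\<exists>M :: 'a mat. linear_AONT (card (UNIV :: 'a set) - 3) (card (UNIV :: 'a set) - 1) M"
proof -
  define p where "p = card (UNIV :: 'a set) - 1"
  have pp: "prime p" using assms(2) by (simp add: p_def)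
  have p2: "p \<ge> 2" using prime_ge_2_nat[OF pp] .
  have q: "card (UNIV :: 'a set) = p + 1" using p2 by (simp add: p_def)
  have t: "card (UNIV :: 'a set) - 3 = p - 2" using q by simp
  have "card {0, 1::'a} = 2" by simp
  then have "{0, 1::'a} \<noteq> UNIV"
  proof (intro notI)
    assume "{0, 1::'a} = UNIV" "card {0, 1::'a} = 2"
    then have "card (UNIV::'a set) = 2" by simp
    with q p2 show False by simp
  qed
  then obtain a :: 'a where a01: "a \<noteq> 0" "a \<noteq> 1" by blast
  have ap: "a ^ p = 1" using fermat_field[OF a01(1)] by (simp add: p_def)
  have pm: "(of_nat p :: 'a) = -1"
  proof -
    have "(of_nat (p + 1) :: 'a) = 0" using card_times_one_zero[where 'a='a] q by simp
    then show ?thesis by (simp add: eq_neg_iff_add_eq_0 add.commute)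
  qed
  have bp: "inverse a ^ p = 1" using ap by (simp add: power_inverse)
  have b1: "inverse a \<noteq> 1" using a01 by (metis inverse_1 inverse_inverse_eq)
  define M where "M = mat p p (\<lambda>(i,j). a ^ (i*j))"
  have Mc: "M \<in> carrier_mat p p" by (simp add: M_def)
  have Mi: "invertible_mat M"
  proof (rule kernel_inv[OF Mc])
    fix v :: "'a vec" assume v: "v \<in> carrier_vec p" and Mv: "M *\<^sub>v v = 0\<^sub>v p"
    have y0: "(\<Sum>k<p. a ^ (i*k) * v $ k) = 0" if "i < p" for i
    proof -
      have "(M *\<^sub>v v) $ i = 0" using Mv that by simp
      then show ?thesis using mult_vec_sum[OF Mc v that] that by (simp add: M_def)
    qed
    show "v = 0\<^sub>v p"
    proof (rule eq_vecI)
      fix j assume "j < dim_vec (0\<^sub>v p :: 'a vec)"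
      then have j: "j < p" by simp
      show "v $ j = 0\<^sub>v p $ j"
        using inv_formula[OF pp ap a01(2) pm j, of "\<lambda>k. v $ k"] y0 j by simp
    qed (use v in simp)
  qed
  have Msub: "invertible_mat (submatrix M I J)"
    if I: "I \<subseteq> {..<p}" and J: "J \<subseteq> {..<p}" and cI: "card I = p - 2" and cJ: "card J = p - 2" for I J
  proof -
    have fI: "finite I" and fJ: "finite J" using I J finite_subset by auto
    have dM: "dim_row M = p" "dim_col M = p" using Mc by simp_all
    have dI: "{i. i < dim_row M \<and> i \<in> I} = I" unfolding dM using I by blast
    have dJ: "{j. j < dim_col M \<and> j \<in> J} = J" unfolding dM using J by blast
    have Sc: "submatrix M I J \<in> carrier_mat (p-2) (p-2)"
    proof (rule carrier_matI)
      show "dim_row (submatrix M I J) = p - 2" by (simp only: dim_submatrix dI cI)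
      show "dim_col (submatrix M I J) = p - 2" by (simp only: dim_submatrix dJ cJ)
    qed
    have "card ({..<p} - I) = 2" using I cI p2 fI by (simp add: card_Diff_subset)
    then obtain r1 r2 where R: "{..<p} - I = {r1, r2}" "r1 \<noteq> r2" by (meson card_2_iff)
    have "card ({..<p} - J) = 2" using J cJ p2 fJ by (simp add: card_Diff_subset)
    then obtain c1 c2 where C: "{..<p} - J = {c1, c2}" "c1 \<noteq> c2" by (meson card_2_iff)
    have r: "r1 < p" "r2 < p" "r1 \<notin> I" "r2 \<notin> I" using R by blast+
    have c: "c1 < p" "c2 < p" "c1 \<notin> J" "c2 \<notin> J" using C by blast+
    have bijJ: "bij_betw (pick J) {..<card J} J" using pick_bij[OF fJ] .
    show ?thesis
    proof (rule kernel_inv[OF Sc])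
      fix v :: "'a vec" assume v: "v \<in> carrier_vec (p-2)" and Sv: "submatrix M I J *\<^sub>v v = 0\<^sub>v (p-2)"
      define x where "x j = (if j \<in> J then v $ card {a\<in>J. a < j} else 0)" for j
      have xpick: "x (pick J k) = v $ k" if "k < p - 2" for k
        using that cJ pick_in_set_le[of k J] card_pick_le[of k J] by (simp add: x_def)
      have hy: "(\<Sum>k<p. a ^ (i*k) * x k) = 0" if "i < p" "i \<noteq> r1" "i \<noteq> r2" for i
      proof -
        have iI: "i \<in> I" using that R by blast
        define rr where "rr = card {a\<in>I. a < i}"
        have "{a\<in>I. a < i} \<subset> I" using iI by auto
        from psubset_card_mono[OF fI this] have rr: "rr < p - 2" using cI by (simp add: rr_def)
        have pr: "pick I rr = i" using pick_card_in_set[OF iI] by (simp add: rr_def)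
        have "(\<Sum>k<p. a ^ (i*k) * x k) = (\<Sum>k\<in>J. a ^ (i*k) * x k)"
          by (rule sum.mono_neutral_right) (use J in \<open>auto simp: x_def\<close>)
        also have "\<dots> = (\<Sum>k<p-2. a ^ (i * pick J k) * x (pick J k))"
          using sum.reindex_bij_betw[OF bijJ, of "\<lambda>k. a ^ (i*k) * x k"] cJ by simp
        also have "\<dots> = (\<Sum>k<p-2. submatrix M I J $$ (rr, k) * v $ k)"
        proof (rule sum.cong)
          fix k assume "k \<in> {..<p-2}"
          then have k: "k < p - 2" by simp
          have "pick J k \<in> J" using pick_in_set_le[of k J] k cJ by simp
          then have "pick J k < p" using J by auto
          moreover have "submatrix M I J $$ (rr, k) = M $$ (pick I rr, pick J k)"
            using submatrix_index[of rr M I k J] dI dJ cI cJ rr k by simp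
          ultimately show "a ^ (i * pick J k) * x (pick J k) = submatrix M I J $$ (rr, k) * v $ k"
            using xpick[OF k] pr that(1) by (simp add: M_def)
        qed simp
        also have "\<dots> = (submatrix M I J *\<^sub>v v) $ rr"
          using mult_vec_sum[OF Sc v rr] by simp
        also have "\<dots> = 0" using Sv rr by simp
        finally show ?thesis .
      qed
      have hx: "x c1 = 0" "x c2 = 0" using c by (simp_all add: x_def)
      have x0: "x j = 0" if "j < p" for j
        using sub_kernel[OF pp ap a01(2) pm bp b1 r(1,2) R(2) c(1,2) C(2) hx hy that] by simp
      show "v = 0\<^sub>v (p-2)"
      proof (rule eq_vecI)
        fix k assume "k < dim_vec (0\<^sub>v (p-2) :: 'a vec)"
        then have k: "k < p - 2" by simp
        have "pick J k \<in> J" using pick_in_set_le[of k J] k cJ by simp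
        then have "pick J k < p" using J by auto
        then show "v $ k = 0\<^sub>v (p-2) $ k" using x0 xpick[OF k] k by simp
      qed (use v in simp)
    qed
  qed
  have "linear_AONT (p - 2) p M"
    unfolding linear_AONT_def using Mc Mi Msub by blast
  then show ?thesis using t by (auto simp: p_def)
qed

end
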